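(* Let $C_1$ and $C_2$ be constant-time two-sided error PACAs. Then there are constant-time two-sided error PACAs $C_\cup$ and $C_\cap$ such that $L(C_\cup)=L(C_1)\cup L(C_2)$ and $L(C_\cap)=L(C_1)\cap L(C_2)$.
   Context: PACA: a bounded one-dimensional CA with state set $Q$, input alphabet $\Sigma\subseteq Q$, accepting states $A\subseteq Q$, boundary symbol $\$$ and two local transition functions $\delta_0,\delta_1$; at each step every cell independently tosses a fair coin $c$ and updates by $\delta_c$ applied to its left neighbor, itself and its right neighbor ($\$$ beyond borders). A computation on input $x\in\Sigma^n$ is accepting if at some step all cells are simultaneously in $A$. Time complexity $T$: every accepting computation on inputs of length $n$ first reaches $A^n$ at a step $<T(n)$; constant-time means $T$ is bounded by a constant. A two-sided error PACA $C$ for $L$ accepts every $x\in L$ with probability $\ge2/3$ and every $x\notin L$ with probability $\le1/3$; $L(C)=L$. *)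

theory Defs
  imports Complex_Main
begin

text \<open>Probabilistic cellular automata (PACA). States are natural numbers drawn from a
finite state set; the boundary symbol is represented by None.\<close>

record paca =
  states :: "nat set"
  inputs :: "nat set"
  accepting :: "nat set"
  delta0 :: "nat option \<Rightarrow> nat \<Rightarrow> nat option \<Rightarrow> nat"
  delta1 :: "nat option \<Rightarrow> nat \<Rightarrow> nat option \<Rightarrow> nat"

definition wf_paca :: "paca \<Rightarrow> bool" where
  "wf_paca C \<longleftrightarrow> finite (states C) \<and> inputs C \<subseteq> states C \<and> accepting C \<subseteq> states C \<and>
     (\<forall>l c r. set_option l \<subseteq> states C \<longrightarrow> c \<in> states C \<longrightarrow> set_option r \<subseteq> states C \<longrightarrow>
        delta0 C l c r \<in> states C \<and> delta1 C l c r \<in> states C)"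

definition step :: "paca \<Rightarrow> bool list \<Rightarrow> nat list \<Rightarrow> nat list" where
  "step C cs w = map (\<lambda>i. (if cs ! i then delta1 C else delta0 C)
       (if i = 0 then None else Some (w ! (i - 1)))
       (w ! i)
       (if i + 1 < length w then Some (w ! (i + 1)) else None)) [0..<length w]"

fun run :: "paca \<Rightarrow> nat list \<Rightarrow> bool list list \<Rightarrow> nat list" where
  "run C w [] = w"
| "run C w (c # cs) = run C (step C c w) cs"

definition acc_at :: "paca \<Rightarrow> nat list \<Rightarrow> bool list list \<Rightarrow> nat \<Rightarrow> bool" where
  "acc_at C x coins k \<longleftrightarrow> set (run C x (take k coins)) \<subseteq> accepting C"

definition coin_seqs :: "nat \<Rightarrow> nat \<Rightarrow> bool list list set" where
  "coin_seqs n t = {cs. length cs = t \<and> (\<forall>c\<in>set cs. length c = n)}"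

definition acc_prob_within :: "paca \<Rightarrow> nat list \<Rightarrow> nat \<Rightarrow> real" where
  "acc_prob_within C x t =
     real (card {cs \<in> coin_seqs (length x) t. \<exists>k\<le>t. acc_at C x cs k}) / 2 ^ (length x * t)"

text \<open>Acceptance probability: probability of the increasing union of the events
 "accepted within t steps".\<close>
definition acc_prob :: "paca \<Rightarrow> nat list \<Rightarrow> real" where
  "acc_prob C x = (SUP t. acc_prob_within C x t)"

definition input_words :: "paca \<Rightarrow> nat list set" where
  "input_words C = {x. set x \<subseteq> inputs C}"

definition constant_time :: "paca \<Rightarrow> bool" where
  "constant_time C \<longleftrightarrow> (\<exists>T::nat. \<forall>x \<in> input_words C. \<forall>cs k.
      (\<forall>c\<in>set cs. length c = length x) \<longrightarrow> k \<le> length cs \<longrightarrow> acc_at C x cs k \<longrightarrow>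
      (\<exists>j<T. j \<le> k \<and> acc_at C x cs j))"

definition two_sided :: "paca \<Rightarrow> bool" where
  "two_sided C \<longleftrightarrow> (\<forall>x \<in> input_words C. acc_prob C x \<ge> 2/3 \<or> acc_prob C x \<le> 1/3)"

definition lang :: "paca \<Rightarrow> nat list set" where
  "lang C = {x \<in> input_words C. acc_prob C x \<ge> 2/3}"

end

theory Submission
  imports Defs "HOL-Library.Countable"
begin



definition pr :: "nat \<Rightarrow> nat \<Rightarrow> (bool list list \<Rightarrow> bool) \<Rightarrow> real" where
  "pr n t E = real (card {cs \<in> coin_seqs n t. E cs}) / 2 ^ (n * t)"

lemma coin_seqs_eq: "coin_seqs n t = {xs. set xs \<subseteq> {c. length c = n} \<and> length xs = t}"
  unfolding coin_seqs_def by auto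

lemma card_bool_lists: "card {c::bool list. length c = n} = 2 ^ n"
proof -
  have "card {xs::bool list. set xs \<subseteq> UNIV \<and> length xs = n} = card (UNIV::bool set) ^ n"
    by (rule card_lists_length_eq) simp
  then show ?thesis by simp
qed

lemma finite_bool_lists: "finite {c::bool list. length c = n}"
proof -
  have "finite {xs::bool list. set xs \<subseteq> UNIV \<and> length xs = n}"
    by (rule finite_lists_length_eq) simp
  then show ?thesis by simp
qed

lemma finite_coin_seqs: "finite (coin_seqs n t)"
  unfolding coin_seqs_eq by (rule finite_lists_length_eq) (rule finite_bool_lists)

lemma card_coin_seqs: "card (coin_seqs n t) = 2 ^ (n * t)"
  unfolding coin_seqs_eq
  by (subst card_lists_length_eq) (auto simp: finite_bool_lists card_bool_lists power_mult)

lemma pr_true: "pr n t (\<lambda>_. True) = 1"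
  unfolding pr_def by (simp add: card_coin_seqs)

lemma pr_false: "pr n t (\<lambda>_. False) = 0"
  unfolding pr_def by simp

lemma pr_cong: "(\<And>cs. cs \<in> coin_seqs n t \<Longrightarrow> A cs = B cs) \<Longrightarrow> pr n t A = pr n t B"
  unfolding pr_def by (metis (mono_tags, lifting) Collect_cong)

lemma pr_mono: "(\<And>cs. cs \<in> coin_seqs n t \<Longrightarrow> A cs \<Longrightarrow> B cs) \<Longrightarrow> pr n t A \<le> pr n t B"
  unfolding pr_def
  by (intro divide_right_mono) (auto intro!: card_mono finite_subset[OF _ finite_coin_seqs])

lemma pr_disj: assumes "\<And>cs. \<not> (A cs \<and> B cs)"
  shows "pr n t (\<lambda>cs. A cs \<or> B cs) = pr n t A + pr n t B"
proof -
  have "{cs \<in> coin_seqs n t. A cs \<or> B cs} = {cs \<in> coin_seqs n t. A cs} \<union> {cs \<in> coin_seqs n t. B cs}" by auto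
  moreover have "card ({cs \<in> coin_seqs n t. A cs} \<union> {cs \<in> coin_seqs n t. B cs}) =
     card {cs \<in> coin_seqs n t. A cs} + card {cs \<in> coin_seqs n t. B cs}"
    by (rule card_Un_disjoint) (use assms finite_coin_seqs in auto)
  ultimately show ?thesis unfolding pr_def by (simp add: add_divide_distrib)
qed

lemma pr_compl: "pr n t (\<lambda>cs. \<not> A cs) = 1 - pr n t A"
proof -
  have "pr n t (\<lambda>cs. A cs \<or> \<not> A cs) = pr n t A + pr n t (\<lambda>cs. \<not> A cs)"
    by (rule pr_disj) auto
  moreover have "pr n t (\<lambda>cs. A cs \<or> \<not> A cs) = 1" using pr_true by simp
  ultimately show ?thesis by simp
qed

lemma pr_split:
  "pr n (a + b) (\<lambda>cs. A (take a cs) \<and> B (drop a cs)) = pr n a A * pr n b B"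
proof -
  let ?S = "{u \<in> coin_seqs n a. A u} \<times> {v \<in> coin_seqs n b. B v}"
  let ?f = "\<lambda>(u::bool list list, v). u @ v"
  have inj: "inj_on ?f ?S"
    by (auto simp: inj_on_def coin_seqs_def)
  have img: "?f ` ?S = {cs \<in> coin_seqs n (a + b). A (take a cs) \<and> B (drop a cs)}"
  proof
    show "?f ` ?S \<subseteq> {cs \<in> coin_seqs n (a + b). A (take a cs) \<and> B (drop a cs)}" by (auto simp: coin_seqs_def)
    show "{cs \<in> coin_seqs n (a + b). A (take a cs) \<and> B (drop a cs)} \<subseteq> ?f ` ?S"
    proof
      fix cs assume cs: "cs \<in> {cs \<in> coin_seqs n (a + b). A (take a cs) \<and> B (drop a cs)}"
      then have "(take a cs, drop a cs) \<in> ?S"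
        by (auto simp: coin_seqs_def dest: in_set_takeD in_set_dropD)
      moreover have "cs = ?f (take a cs, drop a cs)" by simp
      ultimately show "cs \<in> ?f ` ?S" by blast
    qed
  qed
  have "card {cs \<in> coin_seqs n (a + b). A (take a cs) \<and> B (drop a cs)} =
        card {u \<in> coin_seqs n a. A u} * card {v \<in> coin_seqs n b. B v}"
    using card_image[OF inj] img by (simp add: card_cartesian_product)
  then show ?thesis unfolding pr_def
    by (simp add: power_add distrib_left)
qed

lemma pr_prefix: "pr n (a + b) (\<lambda>cs. A (take a cs)) = pr n a A"
  using pr_split[of n a b A "\<lambda>_. True"] by (simp add: pr_true)

lemma acc_at_take: "j \<le> l \<Longrightarrow> acc_at C x (take l cs) j = acc_at C x cs j"
  unfolding acc_at_def by (simp add: min_def)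

lemma acc_prob_within_pr: "acc_prob_within C x t = pr (length x) t (\<lambda>cs. \<exists>k\<le>t. acc_at C x cs k)"
  unfolding acc_prob_within_def pr_def ..

lemma acc_prob_eq:
  assumes bd: "\<forall>cs k. (\<forall>c\<in>set cs. length c = length x) \<longrightarrow> k \<le> length cs \<longrightarrow> acc_at C x cs k \<longrightarrow>
      (\<exists>j<T. j \<le> k \<and> acc_at C x cs j)"
  shows "acc_prob C x = pr (length x) T (\<lambda>cs. \<exists>j<T. acc_at C x cs j)"
proof -
  let ?P = "pr (length x) T (\<lambda>cs. \<exists>j<T. acc_at C x cs j)"
  have ge: "acc_prob_within C x t = ?P" if "T \<le> t" for t
  proof -
    have "acc_prob_within C x t = pr (length x) t (\<lambda>cs. (\<lambda>cs. \<exists>j<T. acc_at C x cs j) (take T cs))"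
      unfolding acc_prob_within_pr
    proof (rule pr_cong)
      fix cs assume cs: "cs \<in> coin_seqs (length x) t"
      show "(\<exists>k\<le>t. acc_at C x cs k) = (\<exists>j<T. acc_at C x (take T cs) j)"
      proof
        assume "\<exists>k\<le>t. acc_at C x cs k"
        then obtain k where "k \<le> t" "acc_at C x cs k" by blast
        moreover have "\<forall>c\<in>set cs. length c = length x" "k \<le> length cs"
          using cs \<open>k \<le> t\<close> by (auto simp: coin_seqs_def)
        ultimately obtain j where "j < T" "acc_at C x cs j"
          using bd by blast
        then show "\<exists>j<T. acc_at C x (take T cs) j" by (auto simp: acc_at_take)
      next
        assume "\<exists>j<T. acc_at C x (take T cs) j"
        then show "\<exists>k\<le>t. acc_at C x cs k" using that
          by (auto simp: acc_at_take) (meson less_imp_le order.trans)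
      qed
    qed
    also have "\<dots> = pr (length x) (T + (t - T)) (\<lambda>cs. (\<lambda>cs. \<exists>j<T. acc_at C x cs j) (take T cs))"
      using that by simp
    also have "\<dots> = ?P" by (rule pr_prefix)
    finally show ?thesis .
  qed
  have le: "acc_prob_within C x t \<le> ?P" for t
  proof (cases "T \<le> t")
    case True then show ?thesis using ge by simp
  next
    case False
    have "acc_prob_within C x t = pr (length x) (t + (T - t)) (\<lambda>cs. (\<lambda>cs. \<exists>k\<le>t. acc_at C x cs k) (take t cs))"
      unfolding acc_prob_within_pr using False by (subst pr_prefix) simp
    also have "\<dots> = pr (length x) T (\<lambda>cs. \<exists>k\<le>t. acc_at C x (take t cs) k)"
      using False by simp
    also have "\<dots> \<le> ?P"
    proof (rule pr_mono)
      fix cs assume "\<exists>k\<le>t. acc_at C x (take t cs) k"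
      then obtain k where "k \<le> t" "acc_at C x (take t cs) k" by blast
      then show "\<exists>j<T. acc_at C x cs j" using False
        by (intro exI[of _ k]) (auto simp: acc_at_take)
    qed
    finally show ?thesis .
  qed
  show ?thesis unfolding acc_prob_def
    by (rule cSup_eq_maximum) (use ge[of T] le in \<open>auto intro: range_eqI[where x=T]\<close>)
qed




definition Acc :: "paca \<Rightarrow> nat list \<Rightarrow> nat \<Rightarrow> bool list list \<Rightarrow> bool" where
  "Acc C x T cs = (\<exists>j<T. acc_at C x cs j)"

fun cntA :: "paca \<Rightarrow> nat list \<Rightarrow> nat \<Rightarrow> nat \<Rightarrow> bool list list \<Rightarrow> nat" where
  "cntA C x T 0 cs = 0"
| "cntA C x T (Suc m) cs = (if Acc C x T cs then 1 else 0) + cntA C x T m (drop T cs)"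

lemma Acc_take: "T \<le> l \<Longrightarrow> Acc C x T (take l cs) = Acc C x T cs"
  unfolding Acc_def by (auto simp: acc_at_take)

lemma cntA_take: "m * T \<le> l \<Longrightarrow> cntA C x T m (take l cs) = cntA C x T m cs"
proof (induction m arbitrary: l cs)
  case 0 then show ?case by simp
next
  case (Suc m)
  then have "T \<le> l" by simp
  moreover have "drop T (take l cs) = take (l - T) (drop T cs)" by (simp add: drop_take)
  moreover have "m * T \<le> l - T" using Suc.prems by simp
  ultimately show ?case using Suc.IH by (simp add: Acc_take)
qed

fun q :: "real \<Rightarrow> nat \<Rightarrow> nat \<Rightarrow> real" where
  "q p m 0 = 1"
| "q p 0 (Suc k) = 0"
| "q p (Suc m) (Suc k) = p * q p m k + (1 - p) * q p m (Suc k)"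

lemma pr_cnt: "pr n (m * T) (\<lambda>cs. k \<le> cntA C x T m cs) = q (pr n T (Acc C x T)) m k"
proof (induction m arbitrary: k)
  case 0 then show ?case by (cases k) (simp_all add: pr_true pr_false)
next
  case (Suc m)
  show ?case
  proof (cases k)
    case 0 then show ?thesis by (simp add: pr_true)
  next
    case (Suc k')
    let ?A = "Acc C x T"
    have "pr n (Suc m * T) (\<lambda>cs. k \<le> cntA C x T (Suc m) cs) =
          pr n (T + m * T) (\<lambda>cs. k \<le> cntA C x T (Suc m) cs)" by simp
    also have "\<dots> =
      pr n (T + m * T) (\<lambda>cs. (?A (take T cs) \<and> k' \<le> cntA C x T m (drop T cs)) \<or>
                             ((\<not> ?A (take T cs)) \<and> Suc k' \<le> cntA C x T m (drop T cs)))"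
      by (rule pr_cong) (auto simp: Suc Acc_take)
    also have "\<dots> = pr n (T + m * T) (\<lambda>cs. ?A (take T cs) \<and> k' \<le> cntA C x T m (drop T cs)) +
         pr n (T + m * T) (\<lambda>cs. (\<lambda>cs. \<not> ?A cs) (take T cs) \<and> Suc k' \<le> cntA C x T m (drop T cs))"
      by (rule pr_disj) auto
    also have "\<dots> = pr n T ?A * q (pr n T ?A) m k' + (1 - pr n T ?A) * q (pr n T ?A) m (Suc k')"
      using pr_split[of n T "m * T" ?A "\<lambda>cs. k' \<le> cntA C x T m cs"]
        pr_split[of n T "m * T" "\<lambda>cs. \<not> ?A cs" "\<lambda>cs. Suc k' \<le> cntA C x T m cs"]
      by (simp add: Suc.IH pr_compl)
    finally show ?thesis by (simp add: Suc)
  qed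
qed

lemma q_bounds: "0 \<le> p \<Longrightarrow> p \<le> 1 \<Longrightarrow> 0 \<le> q p m k \<and> q p m k \<le> 1"
proof (induction p m k rule: q.induct)
  case (3 p m k)
  then have a: "0 \<le> q p m k" "q p m k \<le> 1" "0 \<le> q p m (Suc k)" "q p m (Suc k) \<le> 1" by auto
  have "p * q p m k + (1 - p) * q p m (Suc k) \<le> p * 1 + (1 - p) * 1"
    using a 3(3,4) by (intro add_mono mult_left_mono) auto
  moreover have "0 \<le> p * q p m k + (1 - p) * q p m (Suc k)"
    using a 3(3,4) by simp
  ultimately show ?case by simp
qed simp_all

lemma q_anti: "0 \<le> p \<Longrightarrow> p \<le> 1 \<Longrightarrow> q p m (Suc k) \<le> q p m k"
proof (induction m arbitrary: k)
  case 0 then show ?case by (cases k) simp_all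
next
  case (Suc m)
  show ?case
  proof (cases k)
    case 0 then show ?thesis using q_bounds[OF Suc.prems, of "Suc m" 1] by simp
  next
    case (Suc k')
    have "p * q p m (Suc k') + (1 - p) * q p m (Suc (Suc k')) \<le> p * q p m k' + (1 - p) * q p m (Suc k')"
      using Suc.IH Suc.prems by (intro add_mono mult_left_mono) auto
    then show ?thesis by (simp add: Suc)
  qed
qed

lemma q_mono: "0 \<le> p \<Longrightarrow> p \<le> p' \<Longrightarrow> p' \<le> 1 \<Longrightarrow> q p m k \<le> q p' m k"
proof (induction m arbitrary: k)
  case 0 then show ?case by (cases k) simp_all
next
  case (Suc m)
  show ?case
  proof (cases k)
    case 0 then show ?thesis by simp
  next
    case (Suc k')
    have "p * q p m k' + (1 - p) * q p m (Suc k') \<le> p * q p' m k' + (1 - p) * q p' m (Suc k')"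
      using Suc.IH Suc.prems by (intro add_mono mult_left_mono) auto
    also have "\<dots> = q p' m (Suc k') + p * (q p' m k' - q p' m (Suc k'))" by algebra
    also have "\<dots> \<le> q p' m (Suc k') + p' * (q p' m k' - q p' m (Suc k'))"
      using q_anti[of p' m k'] Suc.prems by (intro add_left_mono mult_right_mono) auto
    also have "\<dots> = p' * q p' m k' + (1 - p') * q p' m (Suc k')" by algebra
    finally show ?thesis by (simp add: Suc)
  qed
qed

lemma q_low: "q (1/3) 7 4 = 379/2187"
  by (simp add: numeral_eq_Suc)
lemma q_high: "q (2/3) 7 4 = 1808/2187"
  by (simp add: numeral_eq_Suc)




type_synonym dat = "nat \<times> nat \<times> nat \<times> bool list"

definition encM :: "nat \<Rightarrow> dat \<Rightarrow> nat" where "encM M v = to_nat v + M + 1"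
definition decM :: "nat \<Rightarrow> nat \<Rightarrow> dat" where
  "decM M s = (if s \<le> M then (0, s, s, []) else from_nat (s - M - 1))"
definition qof :: "dat \<Rightarrow> nat" where "qof v = fst (snd (snd v))"

lemma dec_enc[simp]: "decM M (encM M v) = v" by (simp add: encM_def decM_def)

definition trans :: "paca list \<Rightarrow> nat \<Rightarrow> (nat \<times> nat) list list \<Rightarrow> nat set \<Rightarrow> bool \<Rightarrow> nat option \<Rightarrow> dat \<Rightarrow> nat option \<Rightarrow> dat" where
  "trans Cs T Ws Q c ql v qr = (case v of (t, a, z, bs) \<Rightarrow>
     if t < length Cs * T then
       (let C = Cs ! (t div T); q1 = (if c then delta1 C else delta0 C) ql z qr in
        (Suc t, a, if Suc (t mod T) = T then a else (if q1 \<in> Q then q1 else a),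
         take (length Cs * T) (bs @ [z \<in> accepting C])))
     else (if t < length Cs * T + length Ws then Suc t else t, a, z, bs))"

definition condv :: "paca list \<Rightarrow> nat \<Rightarrow> (nat \<times> nat) list list \<Rightarrow> dat \<Rightarrow> bool" where
  "condv Cs T Ws v = (case v of (t, a, z, bs) \<Rightarrow> length Cs * T \<le> t \<and> t < length Cs * T + length Ws \<and>
      (\<forall>(r, j) \<in> set (Ws ! (t - length Cs * T)). bs ! (r * T + j)))"

definition Vset :: "paca list \<Rightarrow> nat \<Rightarrow> (nat \<times> nat) list list \<Rightarrow> nat set \<Rightarrow> nat set \<Rightarrow> dat set" where
  "Vset Cs T Ws I Q = {(t, a, z, bs). t \<le> length Cs * T + length Ws \<and> a \<in> I \<and> z \<in> Q \<and> length bs \<le> length Cs * T}"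

definition dl :: "paca list \<Rightarrow> nat \<Rightarrow> (nat \<times> nat) list list \<Rightarrow> nat set \<Rightarrow> nat \<Rightarrow> bool \<Rightarrow> nat option \<Rightarrow> nat \<Rightarrow> nat option \<Rightarrow> nat" where
  "dl Cs T Ws Q M c l s r = encM M (trans Cs T Ws Q c (map_option (qof \<circ> decM M) l) (decM M s) (map_option (qof \<circ> decM M) r))"

definition mk :: "paca list \<Rightarrow> nat \<Rightarrow> (nat \<times> nat) list list \<Rightarrow> nat set \<Rightarrow> nat set \<Rightarrow> nat \<Rightarrow> paca" where
  "mk Cs T Ws I Q M = (| states = I \<union> encM M ` Vset Cs T Ws I Q, inputs = I,
      accepting = {s \<in> I \<union> encM M ` Vset Cs T Ws I Q. condv Cs T Ws (decM M s)},
      delta0 = dl Cs T Ws Q M False, delta1 = dl Cs T Ws Q M True |)"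

definition dstep :: "paca list \<Rightarrow> nat \<Rightarrow> (nat \<times> nat) list list \<Rightarrow> nat set \<Rightarrow> bool list \<Rightarrow> dat list \<Rightarrow> dat list" where
  "dstep Cs T Ws Q c ds = map (\<lambda>i. trans Cs T Ws Q (c ! i) (if i = 0 then None else Some (qof (ds ! (i - 1))))
      (ds ! i) (if i + 1 < length ds then Some (qof (ds ! (i + 1))) else None)) [0..<length ds]"

lemma length_step[simp]: "length (step C c w) = length w"
  by (simp add: step_def)

lemma length_run[simp]: "length (run C w cs) = length w"
  by (induction cs arbitrary: w) simp_all

lemma run_snoc: "run C w (xs @ [c]) = step C c (run C w xs)"
  by (induction xs arbitrary: w) simp_all

lemma run_Nil_word[simp]: "run C [] cs = []"
  by (induction cs) (simp_all add: step_def)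

lemma step_states: assumes "wf_paca C" "set w \<subseteq> states C" shows "set (step C c w) \<subseteq> states C"
proof -
  have "\<And>i. i < length w \<Longrightarrow> w ! i \<in> states C" using assms(2) by auto
  then show ?thesis using assms(1) unfolding step_def wf_paca_def
    by (auto simp: nth_mem)
qed

lemma run_states: "wf_paca C \<Longrightarrow> set w \<subseteq> states C \<Longrightarrow> set (run C w cs) \<subseteq> states C"
  by (induction cs arbitrary: w) (simp_all add: step_states)

lemma step_mk: assumes "length c = length w"
  shows "map (decM M) (step (mk Cs T Ws I Q M) c w) = dstep Cs T Ws Q c (map (decM M) w)"
  using assms unfolding step_def dstep_def mk_def
  by (auto simp: dl_def qof_def intro!: nth_equalityI)




locale sim =
  fixes Cs :: "paca list" and T :: nat and Ws :: "(nat \<times> nat) list list" and I Q :: "nat set" and M :: nat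
  assumes wfC: "\<And>C. C \<in> set Cs \<Longrightarrow> wf_paca C"
    and inC: "\<And>C. C \<in> set Cs \<Longrightarrow> states C \<subseteq> Q"
    and IQ: "I \<subseteq> Q" and finQ: "finite Q" and MQ: "\<And>a. a \<in> Q \<Longrightarrow> a \<le> M"
    and IC: "\<And>C. C \<in> set Cs \<Longrightarrow> I \<subseteq> states C"
    and Tpos: "1 \<le> T" and Csne: "Cs \<noteq> []"
    and Wsok: "\<And>w r j. w \<in> set Ws \<Longrightarrow> (r, j) \<in> set w \<Longrightarrow> r < length Cs \<and> j < T"
begin

abbreviation "Cu \<equiv> mk Cs T Ws I Q M"
abbreviation "m \<equiv> length Cs"
abbreviation "Tend \<equiv> length Cs * T + length Ws"

lemma mT_pos: "1 \<le> m * T"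
  using Tpos Csne by (simp add: Suc_le_eq)

lemma states_Cu: "states Cu = I \<union> encM M ` Vset Cs T Ws I Q" by (simp add: mk_def)
lemma inputs_Cu: "inputs Cu = I" by (simp add: mk_def)
lemma accepting_Cu: "accepting Cu = {s \<in> states Cu. condv Cs T Ws (decM M s)}" by (simp add: mk_def)

lemma dec_valid: assumes "s \<in> states Cu" shows "decM M s \<in> Vset Cs T Ws I Q"
proof -
  have "s \<in> I \<or> (\<exists>v\<in>Vset Cs T Ws I Q. s = encM M v)" using assms unfolding states_Cu by auto
  then show ?thesis
  proof
    assume "s \<in> I"
    then have "s \<le> M" "s \<in> Q" using IQ MQ by auto
    then show ?thesis using \<open>s \<in> I\<close> by (simp add: decM_def Vset_def)
  qed auto
qed

lemma trans_valid: "v \<in> Vset Cs T Ws I Q \<Longrightarrow> trans Cs T Ws Q c ql v qr \<in> Vset Cs T Ws I Q"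
  using IQ unfolding Vset_def trans_def by (auto simp: Let_def split: prod.splits)

lemma finite_V: "finite (Vset Cs T Ws I Q)"
proof -
  have "Vset Cs T Ws I Q \<subseteq> {..Tend} \<times> I \<times> Q \<times> {bs. set bs \<subseteq> UNIV \<and> length bs \<le> m * T}"
    unfolding Vset_def by auto
  moreover have "finite ({..Tend} \<times> I \<times> Q \<times> {bs::bool list. set bs \<subseteq> UNIV \<and> length bs \<le> m * T})"
    using finQ IQ finite_subset by (intro finite_cartesian_product finite_lists_length_le) auto
  ultimately show ?thesis by (rule finite_subset)
qed

lemma wf_Cu: "wf_paca Cu"
  unfolding wf_paca_def
proof (intro conjI allI impI)
  show "finite (states Cu)" unfolding states_Cu using finite_V finQ IQ finite_subset by auto
  show "inputs Cu \<subseteq> states Cu" by (simp add: mk_def)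
  show "accepting Cu \<subseteq> states Cu" by (auto simp: mk_def)
  fix l c r assume "set_option l \<subseteq> states Cu" "c \<in> states Cu" "set_option r \<subseteq> states Cu"
  then have "trans Cs T Ws Q b ql (decM M c) qr \<in> Vset Cs T Ws I Q" for b ql qr
    by (intro trans_valid dec_valid)
  then show "delta0 Cu l c r \<in> states Cu" "delta1 Cu l c r \<in> states Cu"
    by (simp_all add: mk_def dl_def)
qed

context
  fixes x :: "nat list" and cs :: "bool list list"
  assumes xI: "set x \<subseteq> I" and csl: "\<And>c. c \<in> set cs \<Longrightarrow> length c = length x"
begin

definition qv :: "nat \<Rightarrow> nat list" where
  "qv k = run (Cs ! (k div T)) x (take (k mod T) (drop (k div T * T) cs))"

definition bv :: "nat \<Rightarrow> nat \<Rightarrow> bool list" where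
  "bv k i = map (\<lambda>l. qv l ! i \<in> accepting (Cs ! (l div T))) [0..<k]"

definition ideal :: "nat \<Rightarrow> nat \<Rightarrow> dat" where
  "ideal k i = (if k < m * T then (k, x ! i, qv k ! i, bv k i) else (min k Tend, x ! i, x ! i, bv (m * T) i))"

lemma length_qv[simp]: "length (qv k) = length x" by (simp add: qv_def)

lemma C_in: "k < m * T \<Longrightarrow> Cs ! (k div T) \<in> set Cs"
proof -
  assume "k < m * T"
  then have "k div T < m" using Tpos by (simp add: div_less_iff_less_mult)
  then show ?thesis by simp
qed

lemma qv_states: "k < m * T \<Longrightarrow> set (qv k) \<subseteq> states (Cs ! (k div T))"
  unfolding qv_def using C_in wfC IC xI by (intro run_states) blast+

lemma x_le: "i < length x \<Longrightarrow> x ! i \<le> M"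
  using xI IQ MQ nth_mem by blast

lemma trans_ideal:
  assumes i: "i < length x" and k: "k < length cs"
  shows "trans Cs T Ws Q (cs ! k ! i) (if i = 0 then None else Some (qof (ideal k (i - 1)))) (ideal k i)
      (if i + 1 < length x then Some (qof (ideal k (i + 1))) else None) = ideal (Suc k) i"
proof (cases "k < m * T")
  case True
  define r where "r = k div T"
  define s where "s = k mod T"
  define C where "C = Cs ! r"
  have qof: "\<And>j. qof (ideal k j) = qv k ! j" using True by (simp add: ideal_def qof_def)
  have q1: "(if cs ! k ! i then delta1 C else delta0 C) (if i = 0 then None else Some (qv k ! (i - 1))) (qv k ! i)
      (if i + 1 < length x then Some (qv k ! (i + 1)) else None) = step C (cs ! k) (qv k) ! i"
    using i by (simp add: step_def)
  have bv: "take (m * T) (bv k i @ [qv k ! i \<in> accepting C]) = bv (Suc k) i"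
    using True by (simp add: bv_def C_def r_def)
  have kk: "r * T + s = k" by (simp add: r_def s_def)
  have e: "ideal k i = (k, x ! i, qv k ! i, bv k i)" using True by (simp add: ideal_def)
  have gen: "trans Cs T Ws Q c ql (ideal k i) qr = (Suc k, x ! i,
      if Suc s = T then x ! i else (if (if c then delta1 C else delta0 C) ql (qv k ! i) qr \<in> Q
        then (if c then delta1 C else delta0 C) ql (qv k ! i) qr else x ! i), bv (Suc k) i)" for c ql qr
    unfolding e trans_def using True bv by (simp add: Let_def C_def r_def s_def)
  show ?thesis
  proof (cases "Suc s = T")
    case T: True
    have "Suc k mod T = 0" using T by (simp add: mod_Suc s_def)
    then have qvS: "qv (Suc k) = x" by (simp add: qv_def)
    have "Suc k \<le> m * T" using True by simp
    then show ?thesis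
      unfolding gen using T qvS by (auto simp: ideal_def bv_def simp del: upt_Suc simp flip: upt_Suc)
  next
    case F: False
    have mS: "Suc k mod T = Suc s" using F by (simp add: mod_Suc s_def)
    have dS: "Suc k div T = r" using mS by (simp add: div_Suc r_def)
    have lt: "Suc k < m * T"
    proof (rule ccontr)
      assume "\<not> Suc k < m * T"
      then have "Suc k = m * T" using True by simp
      then have "Suc k mod T = 0" by simp
      then show False using mS by simp
    qed
    have sl: "s < length (drop (r * T) cs)" using k kk by simp
    have "take (Suc s) (drop (r * T) cs) = take s (drop (r * T) cs) @ [cs ! k]"
      using sl kk by (simp add: take_Suc_conv_app_nth)
    then have qvS: "qv (Suc k) = step C (cs ! k) (qv k)"
      by (simp add: qv_def mS dS run_snoc C_def r_def[symmetric] s_def[symmetric])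
    have "set (step C (cs ! k) (qv k)) \<subseteq> states C"
      using qv_states[OF True] wfC C_in[OF True] by (intro step_states) (auto simp: C_def r_def)
    moreover have "step C (cs ! k) (qv k) ! i \<in> set (step C (cs ! k) (qv k))"
      using i by (intro nth_mem) simp
    ultimately have "step C (cs ! k) (qv k) ! i \<in> Q"
      using inC C_in[OF True] unfolding C_def r_def by blast
    then show ?thesis
      unfolding gen qof using F lt qvS q1 by (simp add: ideal_def)
  qed
next
  case False
  then show ?thesis unfolding trans_def ideal_def by (auto simp: min_def)
qed

lemma sim: "k \<le> length cs \<Longrightarrow> map (decM M) (run Cu x (take k cs)) = map (ideal k) [0..<length x]"
proof (induction k)
  case 0
  show ?case using mT_pos
    by (auto simp: ideal_def qv_def bv_def decM_def x_le intro!: nth_equalityI)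
next
  case (Suc k)
  then have k: "k < length cs" by simp
  have "run Cu x (take (Suc k) cs) = step Cu (cs ! k) (run Cu x (take k cs))"
    using k by (simp add: take_Suc_conv_app_nth run_snoc)
  moreover have len: "length (cs ! k) = length (run Cu x (take k cs))"
    using csl k by simp
  moreover have "map (decM M) (run Cu x (take k cs)) = map (ideal k) [0..<length x]"
    using Suc k by simp
  ultimately have "map (decM M) (run Cu x (take (Suc k) cs)) = dstep Cs T Ws Q (cs ! k) (map (ideal k) [0..<length x])"
    using step_mk[OF len, where Cs=Cs and T=T and Ws=Ws and I=I and Q=Q and M=M] by simp
  also have "\<dots> = map (ideal (Suc k)) [0..<length x]"
  proof (rule nth_equalityI)
    show "length (dstep Cs T Ws Q (cs ! k) (map (ideal k) [0..<length x])) = length (map (ideal (Suc k)) [0..<length x])"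
      by (simp add: dstep_def)
    fix i assume "i < length (dstep Cs T Ws Q (cs ! k) (map (ideal k) [0..<length x]))"
    then have i: "i < length x" by (simp add: dstep_def)
    have "dstep Cs T Ws Q (cs ! k) (map (ideal k) [0..<length x]) ! i =
      trans Cs T Ws Q (cs ! k ! i) (if i = 0 then None else Some (qof (ideal k (i - 1)))) (ideal k i)
        (if i + 1 < length x then Some (qof (ideal k (i + 1))) else None)"
    proof (cases "i = 0")
      case True then show ?thesis using i unfolding dstep_def by (cases "i + 1 < length x") simp_all
    next
      case False then show ?thesis using i unfolding dstep_def by (cases "i + 1 < length x") simp_all
    qed
    also have "\<dots> = ideal (Suc k) i" by (rule trans_ideal[OF i k])
    finally show "dstep Cs T Ws Q (cs ! k) (map (ideal k) [0..<length x]) ! i = map (ideal (Suc k)) [0..<length x] ! i"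
      using i by simp
  qed
  finally show ?case .
qed

lemma acc_at_nth: "acc_at C x cs' j \<longleftrightarrow> (\<forall>i<length x. run C x (take j cs') ! i \<in> accepting C)"
  unfolding acc_at_def by (auto simp: set_conv_nth)

lemma cond_ideal:
  "condv Cs T Ws (ideal k i) \<longleftrightarrow> (m * T \<le> k \<and> k < Tend \<and>
     (\<forall>(r, j)\<in>set (Ws ! (k - m * T)). run (Cs ! r) x (take j (drop (r * T) cs)) ! i \<in> accepting (Cs ! r)))"
proof (cases "k < m * T")
  case True then show ?thesis by (simp add: ideal_def condv_def)
next
  case False
  have bits: "bv (m * T) i ! (r * T + j) = (run (Cs ! r) x (take j (drop (r * T) cs)) ! i \<in> accepting (Cs ! r))"
    if "(r, j) \<in> set (Ws ! (k - m * T))" "k < Tend" for r j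
  proof -
    have "k - m * T < length Ws" using that False by simp
    then have "Ws ! (k - m * T) \<in> set Ws" by (rule nth_mem)
    then have rj: "r < m" "j < T" using Wsok that(1) by blast+
    have "r * T + j < r * T + T" using rj by simp
    also have "r * T + T = Suc r * T" by simp
    also have "Suc r * T \<le> m * T" using rj by (intro mult_le_mono1) simp
    finally have lt: "r * T + j < m * T" .
    have d1: "(r * T + j) div T = r" using rj by simp
    have d2: "(r * T + j) mod T = j" using rj by simp
    show ?thesis using lt rj by (simp add: bv_def qv_def d1 d2)
  qed
  have e: "condv Cs T Ws (ideal k i) \<longleftrightarrow> (m * T \<le> min k Tend \<and> min k Tend < Tend \<and>
      (\<forall>(r, j)\<in>set (Ws ! (min k Tend - m * T)). bv (m * T) i ! (r * T + j)))"
    using False by (simp add: ideal_def condv_def)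
  show ?thesis
  proof (cases "k < Tend")
    case F2: False
    then show ?thesis using e by (simp add: min_def)
  next
    case True
    then have mk: "min k Tend = k" by simp
    have "(\<forall>(r, j)\<in>set (Ws ! (k - m * T)). bv (m * T) i ! (r * T + j)) \<longleftrightarrow>
       (\<forall>(r, j)\<in>set (Ws ! (k - m * T)). run (Cs ! r) x (take j (drop (r * T) cs)) ! i \<in> accepting (Cs ! r))"
      using bits[OF _ True] by auto
    then show ?thesis using e False True unfolding mk by simp
  qed
qed

lemma all_swap: "0 < n \<Longrightarrow> (\<forall>i<n. A \<and> B \<and> (\<forall>(r::nat, j::nat)\<in>W. P i r j)) \<longleftrightarrow> (A \<and> B \<and> (\<forall>(r, j)\<in>W. \<forall>i<n. P i r j))"
  by blast

lemma acc_Cu: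
  assumes "x \<noteq> []" "k \<le> length cs"
  shows "acc_at Cu x cs k \<longleftrightarrow> (m * T \<le> k \<and> k < Tend \<and>
     (\<forall>(r, j)\<in>set (Ws ! (k - m * T)). acc_at (Cs ! r) x (drop (r * T) cs) j))"
proof -
  have st: "set (run Cu x (take k cs)) \<subseteq> states Cu"
    using xI by (intro run_states wf_Cu) (auto simp: states_Cu)
  have "acc_at Cu x cs k \<longleftrightarrow> (\<forall>s\<in>set (run Cu x (take k cs)). condv Cs T Ws (decM M s))"
    unfolding acc_at_def accepting_Cu using st by blast
  also have "\<dots> \<longleftrightarrow> (\<forall>v\<in>set (map (decM M) (run Cu x (take k cs))). condv Cs T Ws v)" by simp
  also have "\<dots> \<longleftrightarrow> (\<forall>i<length x. condv Cs T Ws (ideal k i))"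
    unfolding sim[OF assms(2)] by auto
  also have "\<dots> \<longleftrightarrow> (m * T \<le> k \<and> k < Tend \<and>
     (\<forall>(r, j)\<in>set (Ws ! (k - m * T)). acc_at (Cs ! r) x (drop (r * T) cs) j))"
    unfolding cond_ideal acc_at_nth using assms(1) by (intro all_swap) simp
  finally show ?thesis .
qed

end
end



context sim
begin

lemma ct_bound: "x \<in> input_words Cu \<Longrightarrow> \<forall>cs k. (\<forall>c\<in>set cs. length c = length x) \<longrightarrow> k \<le> length cs \<longrightarrow>
    acc_at Cu x cs k \<longrightarrow> (\<exists>j<Tend. j \<le> k \<and> acc_at Cu x cs j)"
proof (intro allI impI)
  fix x cs k assume x: "x \<in> input_words Cu" and c: "\<forall>c\<in>set cs. length c = length x"
    and k: "k \<le> length cs" and a: "acc_at Cu x cs k"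
  have xI: "set x \<subseteq> I" using x by (simp add: input_words_def inputs_Cu)
  show "\<exists>j<Tend. j \<le> k \<and> acc_at Cu x cs j"
  proof (cases "x = []")
    case True
    then have "acc_at Cu x cs 0" by (simp add: acc_at_def)
    then show ?thesis using mT_pos by (intro exI[of _ 0]) auto
  next
    case False
    then show ?thesis using acc_Cu[OF xI _ False k] c a by auto
  qed
qed

lemma ct_Cu: "constant_time Cu"
  unfolding constant_time_def using ct_bound by blast

lemma accprob_Cu:
  assumes x: "x \<in> input_words Cu" and ne: "x \<noteq> []"
  shows "acc_prob Cu x = pr (length x) Tend (\<lambda>cs. \<exists>w\<in>set Ws. \<forall>(r, j)\<in>set w. acc_at (Cs ! r) x (drop (r * T) cs) j)"
proof -
  have xI: "set x \<subseteq> I" using x by (simp add: input_words_def inputs_Cu)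
  have "acc_prob Cu x = pr (length x) Tend (\<lambda>cs. \<exists>j<Tend. acc_at Cu x cs j)"
    by (rule acc_prob_eq) (rule ct_bound[OF x])
  also have "\<dots> = pr (length x) Tend (\<lambda>cs. \<exists>w\<in>set Ws. \<forall>(r, j)\<in>set w. acc_at (Cs ! r) x (drop (r * T) cs) j)"
  proof (rule pr_cong)
    fix cs assume cs: "cs \<in> coin_seqs (length x) Tend"
    then have c: "\<And>c. c \<in> set cs \<Longrightarrow> length c = length x" and l: "length cs = Tend"
      by (auto simp: coin_seqs_def)
    have A: "acc_at Cu x cs j \<longleftrightarrow> (m * T \<le> j \<and> j < Tend \<and>
      (\<forall>(r, j')\<in>set (Ws ! (j - m * T)). acc_at (Cs ! r) x (drop (r * T) cs) j'))" if "j < Tend" for j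
      using acc_Cu[OF xI c ne] that l by simp
    show "(\<exists>j<Tend. acc_at Cu x cs j) = (\<exists>w\<in>set Ws. \<forall>(r, j)\<in>set w. acc_at (Cs ! r) x (drop (r * T) cs) j)"
    proof
      assume "\<exists>j<Tend. acc_at Cu x cs j"
      then obtain j where j: "j < Tend" "acc_at Cu x cs j" by blast
      then have "m * T \<le> j" "Ws ! (j - m * T) \<in> set Ws" using A by auto
      then show "\<exists>w\<in>set Ws. \<forall>(r, j)\<in>set w. acc_at (Cs ! r) x (drop (r * T) cs) j"
        using A[OF j(1)] j(2) by blast
    next
      assume "\<exists>w\<in>set Ws. \<forall>(r, j)\<in>set w. acc_at (Cs ! r) x (drop (r * T) cs) j"
      then obtain d where d: "d < length Ws" "\<forall>(r, j)\<in>set (Ws ! d). acc_at (Cs ! r) x (drop (r * T) cs) j"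
        by (auto simp: in_set_conv_nth)
      then have "acc_at Cu x cs (m * T + d)" using A[of "m * T + d"] by simp
      then show "\<exists>j<Tend. acc_at Cu x cs j" using d(1) by (intro exI[of _ "m * T + d"]) simp
    qed
  qed
  finally show ?thesis .
qed

end



fun wit :: "nat \<Rightarrow> nat \<Rightarrow> nat \<Rightarrow> nat \<Rightarrow> (nat \<times> nat) list list" where
  "wit r0 T 0 k = (if k = 0 then [[]] else [])"
| "wit r0 T (Suc m) k = (if k = 0 then [[]] else
     concat (map (\<lambda>j. map ((#) (r0, j)) (wit (Suc r0) T m (k - 1))) [0..<T]) @ wit (Suc r0) T m k)"

lemma wit_bounds: "w \<in> set (wit r0 T m k) \<Longrightarrow> (r, j) \<in> set w \<Longrightarrow> r0 \<le> r \<and> r < r0 + m \<and> j < T"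
proof (induction m arbitrary: r0 k w)
  case 0 then show ?case by (simp split: if_splits)
next
  case (Suc m)
  show ?case
  proof (cases "k = 0")
    case True then show ?thesis using Suc.prems by simp
  next
    case False
    then have "(\<exists>j<T. \<exists>w'\<in>set (wit (Suc r0) T m (k - 1)). w = (r0, j) # w') \<or> w \<in> set (wit (Suc r0) T m k)"
      using Suc.prems(1) by auto
    then show ?thesis
    proof
      assume "\<exists>j<T. \<exists>w'\<in>set (wit (Suc r0) T m (k - 1)). w = (r0, j) # w'"
      then obtain j' w' where "j' < T" "w' \<in> set (wit (Suc r0) T m (k - 1))" "w = (r0, j') # w'" by blast
      then show ?thesis using Suc.IH[of w' "Suc r0" "k - 1"] Suc.prems(2) by auto
    next
      assume "w \<in> set (wit (Suc r0) T m k)"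
      then show ?thesis using Suc.IH[of w "Suc r0" k] Suc.prems(2) by auto
    qed
  qed
qed

lemma wit_sem:
  assumes "\<And>r. r0 \<le> r \<Longrightarrow> r < r0 + m \<Longrightarrow> Cs ! r = C"
  shows "(\<exists>w\<in>set (wit r0 T m k). \<forall>(r, j)\<in>set w. acc_at (Cs ! r) x (drop (r * T) cs) j) \<longleftrightarrow>
         k \<le> cntA C x T m (drop (r0 * T) cs)"
  using assms
proof (induction m arbitrary: r0 k)
  case 0 then show ?case by simp
next
  case (Suc m)
  show ?case
  proof (cases k)
    case 0 then show ?thesis by simp
  next
    case (Suc k')
    have IH1: "(\<exists>w\<in>set (wit (Suc r0) T m k'). \<forall>(r, j)\<in>set w. acc_at (Cs ! r) x (drop (r * T) cs) j) \<longleftrightarrow>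
         k' \<le> cntA C x T m (drop (Suc r0 * T) cs)"
      using Suc.prems by (intro Suc.IH) auto
    have IH2: "(\<exists>w\<in>set (wit (Suc r0) T m (Suc k')). \<forall>(r, j)\<in>set w. acc_at (Cs ! r) x (drop (r * T) cs) j) \<longleftrightarrow>
         Suc k' \<le> cntA C x T m (drop (Suc r0 * T) cs)"
      using Suc.prems by (intro Suc.IH) auto
    have Cr0: "Cs ! r0 = C" using Suc.prems by simp
    have dd: "drop T (drop (r0 * T) cs) = drop (Suc r0 * T) cs" by (simp add: add.commute)
    define Pw where "Pw w = (\<forall>(r, j)\<in>set w. acc_at (Cs ! r) x (drop (r * T) cs) j)" for w
    have Pc: "Pw ((r0, j) # w) \<longleftrightarrow> acc_at C x (drop (r0 * T) cs) j \<and> Pw w" for j w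
      by (simp add: Pw_def Cr0)
    have S: "(\<exists>w\<in>set (wit r0 T (Suc m) k). Pw w) \<longleftrightarrow>
       (\<exists>j<T. \<exists>w\<in>set (wit (Suc r0) T m k'). Pw ((r0, j) # w)) \<or> (\<exists>w\<in>set (wit (Suc r0) T m (Suc k')). Pw w)"
    proof -
      have setW: "set (wit r0 T (Suc m) k) = (\<Union>j\<in>{0..<T}. (#) (r0, j) ` set (wit (Suc r0) T m k')) \<union>
          set (wit (Suc r0) T m (Suc k'))" by (simp add: Suc)
      show ?thesis unfolding setW by fastforce
    qed
    have "(\<exists>w\<in>set (wit r0 T (Suc m) k). \<forall>(r, j)\<in>set w. acc_at (Cs ! r) x (drop (r * T) cs) j) \<longleftrightarrow>
       ((\<exists>j<T. acc_at C x (drop (r0 * T) cs) j) \<and>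
          (\<exists>w\<in>set (wit (Suc r0) T m k'). \<forall>(r, j)\<in>set w. acc_at (Cs ! r) x (drop (r * T) cs) j)) \<or>
       (\<exists>w\<in>set (wit (Suc r0) T m (Suc k')). \<forall>(r, j)\<in>set w. acc_at (Cs ! r) x (drop (r * T) cs) j)"
      using S unfolding Pc unfolding Pw_def by blast
    also have "\<dots> \<longleftrightarrow> k \<le> cntA C x T (Suc m) (drop (r0 * T) cs)"
      unfolding IH1 IH2 by (auto simp: Suc Acc_def dd)
    finally show ?thesis .
  qed
qed




lemma pr_nonneg: "0 \<le> pr n t E" by (simp add: pr_def)
lemma pr_le1: "pr n t E \<le> 1"
  using pr_mono[of n t E "\<lambda>_. True"] pr_true by simp

lemma amp:
  assumes "0 \<le> p" "p \<le> 1" "p \<ge> 2/3 \<or> p \<le> 1/3"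
  shows "(p \<ge> 2/3 \<longrightarrow> q p 7 4 \<ge> 1808/2187) \<and> (\<not> p \<ge> 2/3 \<longrightarrow> q p 7 4 \<le> 379/2187) \<and>
     0 \<le> q p 7 4 \<and> q p 7 4 \<le> 1"
proof -
  have "p \<ge> 2/3 \<longrightarrow> q (2/3) 7 4 \<le> q p 7 4" using assms by (auto intro: q_mono)
  moreover have "\<not> p \<ge> 2/3 \<longrightarrow> q p 7 4 \<le> q (1/3) 7 4" using assms by (auto intro: q_mono)
  ultimately show ?thesis using q_bounds[of p 7 4] assms by (simp add: q_low q_high)
qed

lemma union_arith:
  fixes a b :: real
  assumes "0 \<le> a" "a \<le> 1" "0 \<le> b" "b \<le> 1"
    and "A \<longrightarrow> a \<ge> 1808/2187" "\<not> A \<longrightarrow> a \<le> 379/2187"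
    and "B \<longrightarrow> b \<ge> 1808/2187" "\<not> B \<longrightarrow> b \<le> 379/2187"
  shows "(A \<or> B \<longrightarrow> 1 - (1 - a) * (1 - b) \<ge> 2/3) \<and> (\<not> (A \<or> B) \<longrightarrow> 1 - (1 - a) * (1 - b) \<le> 1/3)"
proof (intro conjI impI)
  assume "A \<or> B"
  then have "(1 - a) * (1 - b) \<le> 379/2187"
  proof
    assume A then have "(1 - a) * (1 - b) \<le> (379/2187) * 1"
      using assms by (intro mult_mono) auto
    then show ?thesis by simp
  next
    assume B then have "(1 - a) * (1 - b) \<le> 1 * (379/2187)"
      using assms by (intro mult_mono) auto
    then show ?thesis by simp
  qed
  then show "1 - (1 - a) * (1 - b) \<ge> 2/3" by simp
next
  assume "\<not> (A \<or> B)"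
  then have "(1808/2187) * (1808/2187) \<le> (1 - a) * (1 - b)"
    using assms by (intro mult_mono) auto
  then show "1 - (1 - a) * (1 - b) \<le> 1/3" by simp
qed

lemma inter_arith:
  fixes a b :: real
  assumes "0 \<le> a" "a \<le> 1" "0 \<le> b" "b \<le> 1"
    and "A \<longrightarrow> a \<ge> 1808/2187" "\<not> A \<longrightarrow> a \<le> 379/2187"
    and "B \<longrightarrow> b \<ge> 1808/2187" "\<not> B \<longrightarrow> b \<le> 379/2187"
  shows "(A \<and> B \<longrightarrow> a * b \<ge> 2/3) \<and> (\<not> (A \<and> B) \<longrightarrow> a * b \<le> 1/3)"
proof (intro conjI impI)
  assume "A \<and> B"
  then have "(1808/2187) * (1808/2187) \<le> a * b"
    using assms by (intro mult_mono) auto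
  then show "a * b \<ge> 2/3" by simp
next
  assume "\<not> (A \<and> B)"
  then have "a * b \<le> 379/2187"
  proof (cases A)
    case True
    then have "\<not> B" using \<open>\<not> (A \<and> B)\<close> by simp
    then have "a * b \<le> 1 * (379/2187)" using assms by (intro mult_mono) auto
    then show ?thesis by simp
  next
    case False
    then have "a * b \<le> (379/2187) * 1" using assms by (intro mult_mono) auto
    then show ?thesis by simp
  qed
  then show "a * b \<le> 1/3" by simp
qed

lemma acc_prob_Nil: "acc_prob C [] = 1"
proof -
  have "acc_prob_within C [] t = 1" for t
  proof -
    have "acc_prob_within C [] t = pr 0 t (\<lambda>cs. \<exists>k\<le>t. acc_at C [] cs k)"
      by (simp add: acc_prob_within_pr)
    also have "\<dots> = pr 0 t (\<lambda>_. True)"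
      by (rule pr_cong) (auto simp: acc_at_def intro: exI[of _ 0])
    finally have "acc_prob_within C [] t = pr 0 t (\<lambda>_. True)" .
    then show ?thesis by (simp add: pr_true)
  qed
  then show ?thesis unfolding acc_prob_def by simp
qed

lemma pr_and2:
  "pr n (14 * T + L) (\<lambda>cs. 4 \<le> cntA C1 x T 7 cs \<and> 4 \<le> cntA C2 x T 7 (drop (7 * T) cs)) =
   pr n (7 * T) (\<lambda>cs. 4 \<le> cntA C1 x T 7 cs) * pr n (7 * T) (\<lambda>cs. 4 \<le> cntA C2 x T 7 cs)"
proof -
  let ?G = "\<lambda>cs. 4 \<le> cntA C1 x T 7 (take (7 * T) cs) \<and> 4 \<le> cntA C2 x T 7 (drop (7 * T) cs)"
  have "pr n (14 * T + L) (\<lambda>cs. 4 \<le> cntA C1 x T 7 cs \<and> 4 \<le> cntA C2 x T 7 (drop (7 * T) cs)) =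
        pr n (14 * T + L) (\<lambda>cs. ?G (take (14 * T) cs))"
  proof (rule pr_cong)
    fix cs :: "bool list list"
    have "cntA C1 x T 7 (take (7 * T) (take (14 * T) cs)) = cntA C1 x T 7 cs"
      by (simp add: cntA_take)
    moreover have "drop (7 * T) (take (14 * T) cs) = take (7 * T) (drop (7 * T) cs)"
      by (simp add: drop_take)
    moreover have "cntA C2 x T 7 (take (7 * T) (drop (7 * T) cs)) = cntA C2 x T 7 (drop (7 * T) cs)"
      by (simp add: cntA_take)
    ultimately show "(4 \<le> cntA C1 x T 7 cs \<and> 4 \<le> cntA C2 x T 7 (drop (7 * T) cs)) = ?G (take (14 * T) cs)"
      by simp
  qed
  also have "\<dots> = pr n (14 * T) ?G" by (rule pr_prefix)
  also have "\<dots> = pr n (7 * T + 7 * T) ?G" by simp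
  also have "\<dots> = pr n (7 * T) (\<lambda>cs. 4 \<le> cntA C1 x T 7 cs) * pr n (7 * T) (\<lambda>cs. 4 \<le> cntA C2 x T 7 cs)"
    by (rule pr_split)
  finally show ?thesis .
qed

lemma pr_or2:
  "pr n (14 * T + L) (\<lambda>cs. 4 \<le> cntA C1 x T 7 cs \<or> 4 \<le> cntA C2 x T 7 (drop (7 * T) cs)) =
   1 - (1 - pr n (7 * T) (\<lambda>cs. 4 \<le> cntA C1 x T 7 cs)) * (1 - pr n (7 * T) (\<lambda>cs. 4 \<le> cntA C2 x T 7 cs))"
proof -
  let ?G = "\<lambda>cs. \<not> 4 \<le> cntA C1 x T 7 (take (7 * T) cs) \<and> \<not> 4 \<le> cntA C2 x T 7 (drop (7 * T) cs)"
  have "pr n (14 * T + L) (\<lambda>cs. 4 \<le> cntA C1 x T 7 cs \<or> 4 \<le> cntA C2 x T 7 (drop (7 * T) cs)) =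
        pr n (14 * T + L) (\<lambda>cs. \<not> ?G (take (14 * T) cs))"
  proof (rule pr_cong)
    fix cs :: "bool list list"
    have "cntA C1 x T 7 (take (7 * T) (take (14 * T) cs)) = cntA C1 x T 7 cs"
      by (simp add: cntA_take)
    moreover have "drop (7 * T) (take (14 * T) cs) = take (7 * T) (drop (7 * T) cs)"
      by (simp add: drop_take)
    moreover have "cntA C2 x T 7 (take (7 * T) (drop (7 * T) cs)) = cntA C2 x T 7 (drop (7 * T) cs)"
      by (simp add: cntA_take)
    ultimately show "(4 \<le> cntA C1 x T 7 cs \<or> 4 \<le> cntA C2 x T 7 (drop (7 * T) cs)) = (\<not> ?G (take (14 * T) cs))"
      by simp
  qed
  also have "\<dots> = 1 - pr n (14 * T + L) (\<lambda>cs. ?G (take (14 * T) cs))" by (rule pr_compl)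
  also have "pr n (14 * T + L) (\<lambda>cs. ?G (take (14 * T) cs)) = pr n (14 * T) ?G" by (rule pr_prefix)
  also have "\<dots> = pr n (7 * T + 7 * T) ?G" by simp
  also have "\<dots> = pr n (7 * T) (\<lambda>cs. \<not> 4 \<le> cntA C1 x T 7 cs) * pr n (7 * T) (\<lambda>cs. \<not> 4 \<le> cntA C2 x T 7 cs)"
    by (rule pr_split)
  finally show ?thesis by (simp add: pr_compl)
qed




theorem mainTheorem11:
  assumes "wf_paca C1" and "wf_paca C2"
    and "inputs C1 = inputs C2"
    and "two_sided C1" and "two_sided C2"
    and "constant_time C1" and "constant_time C2"
  shows "\<exists>Cu Ci. wf_paca Cu \<and> wf_paca Ci \<and> inputs Cu = inputs C1 \<and> inputs Ci = inputs C1 \<and>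
    two_sided Cu \<and> two_sided Ci \<and> constant_time Cu \<and> constant_time Ci \<and>
    lang Cu = lang C1 \<union> lang C2 \<and> lang Ci = lang C1 \<inter> lang C2"
proof -
  from assms(6) obtain T1 where T1: "\<forall>x\<in>input_words C1. \<forall>cs k. (\<forall>c\<in>set cs. length c = length x) \<longrightarrow>
      k \<le> length cs \<longrightarrow> acc_at C1 x cs k \<longrightarrow> (\<exists>j<T1. j \<le> k \<and> acc_at C1 x cs j)"
    unfolding constant_time_def by blast
  from assms(7) obtain T2 where T2: "\<forall>x\<in>input_words C2. \<forall>cs k. (\<forall>c\<in>set cs. length c = length x) \<longrightarrow>
      k \<le> length cs \<longrightarrow> acc_at C2 x cs k \<longrightarrow> (\<exists>j<T2. j \<le> k \<and> acc_at C2 x cs j)"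
    unfolding constant_time_def by blast
  define T where "T = max T1 T2 + 1"
  define I where "I = inputs C1"
  define Q where "Q = states C1 \<union> states C2"
  define M where "M = Max (insert 0 Q)"
  define Cs where "Cs = replicate 7 C1 @ replicate 7 C2"
  define W1 where "W1 = wit 0 T 7 4"
  define W2 where "W2 = wit 7 T 7 4"
  define WsU where "WsU = W1 @ W2"
  define WsI where "WsI = concat (map (\<lambda>w1. map ((@) w1) W2) W1)"
  define Cu where "Cu = mk Cs T WsU I Q M"
  define Ci where "Ci = mk Cs T WsI I Q M"
  have lenCs: "length Cs = 14" by (simp add: Cs_def)
  have Cs1: "Cs ! r = C1" if "r < 7" for r using that by (simp add: Cs_def nth_append)
  have Cs2: "Cs ! r = C2" if "7 \<le> r" "r < 14" for r using that by (simp add: Cs_def nth_append)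
  have setCs: "set Cs = {C1, C2}" by (auto simp: Cs_def)
  have finQ: "finite Q" using assms(1,2) by (simp add: Q_def wf_paca_def)
  have W1b: "\<And>w r j. w \<in> set W1 \<Longrightarrow> (r, j) \<in> set w \<Longrightarrow> r < 14 \<and> j < T"
    unfolding W1_def using wit_bounds by fastforce
  have W2b: "\<And>w r j. w \<in> set W2 \<Longrightarrow> (r, j) \<in> set w \<Longrightarrow> r < 14 \<and> j < T"
    unfolding W2_def using wit_bounds by fastforce
  have simbase: "sim Cs T Ws I Q M" if "\<And>w r j. w \<in> set Ws \<Longrightarrow> (r, j) \<in> set w \<Longrightarrow> r < 14 \<and> j < T" for Ws
  proof
    show "\<And>C. C \<in> set Cs \<Longrightarrow> wf_paca C" using assms(1,2) setCs by auto
    show "\<And>C. C \<in> set Cs \<Longrightarrow> states C \<subseteq> Q" using setCs by (auto simp: Q_def)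
    show "\<And>C. C \<in> set Cs \<Longrightarrow> I \<subseteq> states C" using setCs assms(1,2,3)
      by (auto simp: I_def wf_paca_def)
    show "I \<subseteq> Q" using assms(1) by (auto simp: I_def Q_def wf_paca_def)
    show "finite Q" by (rule finQ)
    show "\<And>a. a \<in> Q \<Longrightarrow> a \<le> M" unfolding M_def using finQ by (intro Max_ge) auto
    show "1 \<le> T" by (simp add: T_def)
    show "Cs \<noteq> []" by (simp add: Cs_def)
    show "\<And>w r j. w \<in> set Ws \<Longrightarrow> (r, j) \<in> set w \<Longrightarrow> r < length Cs \<and> j < T"
      using that lenCs by auto
  qed
  have simU: "sim Cs T WsU I Q M" using W1b W2b by (intro simbase) (auto simp: WsU_def)
  have simI: "sim Cs T WsI I Q M" using W1b W2b by (intro simbase) (auto simp: WsI_def)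
  have iwU: "input_words Cu = input_words C1" by (simp add: input_words_def Cu_def mk_def I_def)
  have iwI: "input_words Ci = input_words C1" by (simp add: input_words_def Ci_def mk_def I_def)
  have iw2: "input_words C2 = input_words C1" by (simp add: input_words_def assms(3))
  have p1: "acc_prob C1 x = pr (length x) T (Acc C1 x T)" if x1: "x \<in> input_words C1" for x
  proof -
    have "acc_prob C1 x = pr (length x) T (\<lambda>cs. \<exists>j<T. acc_at C1 x cs j)"
    proof (rule acc_prob_eq)
      show "\<forall>cs k. (\<forall>c\<in>set cs. length c = length x) \<longrightarrow> k \<le> length cs \<longrightarrow> acc_at C1 x cs k \<longrightarrow>
          (\<exists>j<T. j \<le> k \<and> acc_at C1 x cs j)"
      proof (intro allI impI)
        fix cs k assume c: "\<forall>c\<in>set cs. length c = length x" and kk: "k \<le> length cs" and ac: "acc_at C1 x cs k"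
        obtain j where "j < T1" "j \<le> k" "acc_at C1 x cs j" using T1[rule_format, OF x1 c[rule_format] kk ac] by blast
        then show "\<exists>j<T. j \<le> k \<and> acc_at C1 x cs j" by (intro exI[of _ j]) (simp add: T_def)
      qed
    qed
    then show ?thesis by (simp add: Acc_def[abs_def])
  qed
  have p2: "acc_prob C2 x = pr (length x) T (Acc C2 x T)" if x1: "x \<in> input_words C1" for x
  proof -
    have "acc_prob C2 x = pr (length x) T (\<lambda>cs. \<exists>j<T. acc_at C2 x cs j)"
    proof (rule acc_prob_eq)
      show "\<forall>cs k. (\<forall>c\<in>set cs. length c = length x) \<longrightarrow> k \<le> length cs \<longrightarrow> acc_at C2 x cs k \<longrightarrow>
          (\<exists>j<T. j \<le> k \<and> acc_at C2 x cs j)"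
      proof (intro allI impI)
        have x2: "x \<in> input_words C2" using x1 iw2 by simp
        fix cs k assume c: "\<forall>c\<in>set cs. length c = length x" and kk: "k \<le> length cs" and ac: "acc_at C2 x cs k"
        obtain j where "j < T2" "j \<le> k" "acc_at C2 x cs j" using T2[rule_format, OF x2 c[rule_format] kk ac] by blast
        then show "\<exists>j<T. j \<le> k \<and> acc_at C2 x cs j" by (intro exI[of _ j]) (simp add: T_def)
      qed
    qed
    then show ?thesis by (simp add: Acc_def[abs_def])
  qed
  define a where "a x = q (acc_prob C1 x) 7 4" for x
  define b where "b x = q (acc_prob C2 x) 7 4" for x
  have pa: "pr (length x) (7 * T) (\<lambda>cs. 4 \<le> cntA C1 x T 7 cs) = a x" if "x \<in> input_words C1" for x
    using pr_cnt[of "length x" 7 T 4 C1 x] p1[OF that] by (simp add: a_def)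
  have pb: "pr (length x) (7 * T) (\<lambda>cs. 4 \<le> cntA C2 x T 7 cs) = b x" if "x \<in> input_words C1" for x
    using pr_cnt[of "length x" 7 T 4 C2 x] p2[OF that] by (simp add: b_def)
  have E1: "(\<exists>w\<in>set W1. \<forall>(r, j)\<in>set w. acc_at (Cs ! r) x (drop (r * T) cs) j) \<longleftrightarrow> 4 \<le> cntA C1 x T 7 cs" for x cs
    using wit_sem[of 0 7 Cs C1 T 4 x cs] Cs1 by (simp add: W1_def)
  have E2: "(\<exists>w\<in>set W2. \<forall>(r, j)\<in>set w. acc_at (Cs ! r) x (drop (r * T) cs) j) \<longleftrightarrow> 4 \<le> cntA C2 x T 7 (drop (7 * T) cs)" for x cs
    using wit_sem[of 7 7 Cs C2 T 4 x cs] Cs2 by (simp add: W2_def)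
  have accU: "acc_prob Cu x = 1 - (1 - a x) * (1 - b x)" if "x \<in> input_words C1" "x \<noteq> []" for x
  proof -
    have "acc_prob Cu x = pr (length x) (14 * T + length WsU)
        (\<lambda>cs. \<exists>w\<in>set WsU. \<forall>(r, j)\<in>set w. acc_at (Cs ! r) x (drop (r * T) cs) j)"
      using sim.accprob_Cu[OF simU, of x] that iwU lenCs by (simp add: Cu_def)
    also have "\<dots> = pr (length x) (14 * T + length WsU)
        (\<lambda>cs. 4 \<le> cntA C1 x T 7 cs \<or> 4 \<le> cntA C2 x T 7 (drop (7 * T) cs))"
      by (rule pr_cong) (simp only: WsU_def set_append bex_Un E1 E2)
    also have "\<dots> = 1 - (1 - a x) * (1 - b x)"
      by (simp only: pr_or2 pa[OF that(1)] pb[OF that(1)])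
    finally show ?thesis .
  qed
  have accI: "acc_prob Ci x = a x * b x" if "x \<in> input_words C1" "x \<noteq> []" for x
  proof -
    have "acc_prob Ci x = pr (length x) (14 * T + length WsI)
        (\<lambda>cs. \<exists>w\<in>set WsI. \<forall>(r, j)\<in>set w. acc_at (Cs ! r) x (drop (r * T) cs) j)"
      using sim.accprob_Cu[OF simI, of x] that iwI lenCs by (simp add: Ci_def)
    also have "\<dots> = pr (length x) (14 * T + length WsI)
        (\<lambda>cs. 4 \<le> cntA C1 x T 7 cs \<and> 4 \<le> cntA C2 x T 7 (drop (7 * T) cs))"
    proof (rule pr_cong)
      fix cs
      have "(\<exists>w\<in>set WsI. \<forall>(r, j)\<in>set w. acc_at (Cs ! r) x (drop (r * T) cs) j) \<longleftrightarrow>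
        (\<exists>w\<in>set W1. \<forall>(r, j)\<in>set w. acc_at (Cs ! r) x (drop (r * T) cs) j) \<and>
        (\<exists>w\<in>set W2. \<forall>(r, j)\<in>set w. acc_at (Cs ! r) x (drop (r * T) cs) j)"
      proof -
        define P where "P w = (\<forall>(r, j)\<in>set w. acc_at (Cs ! r) x (drop (r * T) cs) j)" for w
        have Papp: "P (w1 @ w2) \<longleftrightarrow> P w1 \<and> P w2" for w1 w2 unfolding P_def by auto
        have "(\<exists>w\<in>set WsI. P w) \<longleftrightarrow> (\<exists>w1\<in>set W1. \<exists>w2\<in>set W2. P (w1 @ w2))"
          unfolding WsI_def by auto
        then have "(\<exists>w\<in>set WsI. P w) \<longleftrightarrow> (\<exists>w\<in>set W1. P w) \<and> (\<exists>w\<in>set W2. P w)"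
          unfolding Papp by blast
        then show ?thesis unfolding P_def .
      qed
      then show "(\<exists>w\<in>set WsI. \<forall>(r, j)\<in>set w. acc_at (Cs ! r) x (drop (r * T) cs) j) =
          (4 \<le> cntA C1 x T 7 cs \<and> 4 \<le> cntA C2 x T 7 (drop (7 * T) cs))"
        using E1 E2 by simp
    qed
    also have "\<dots> = a x * b x"
      by (simp only: pr_and2 pa[OF that(1)] pb[OF that(1)])
    finally show ?thesis .
  qed
  have ab: "(acc_prob C1 x \<ge> 2/3 \<longrightarrow> a x \<ge> 1808/2187) \<and> (\<not> acc_prob C1 x \<ge> 2/3 \<longrightarrow> a x \<le> 379/2187) \<and>
      0 \<le> a x \<and> a x \<le> 1 \<and>
      (acc_prob C2 x \<ge> 2/3 \<longrightarrow> b x \<ge> 1808/2187) \<and> (\<not> acc_prob C2 x \<ge> 2/3 \<longrightarrow> b x \<le> 379/2187) \<and>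
      0 \<le> b x \<and> b x \<le> 1" if "x \<in> input_words C1" for x
  proof -
    have "0 \<le> acc_prob C1 x" "acc_prob C1 x \<le> 1" "0 \<le> acc_prob C2 x" "acc_prob C2 x \<le> 1"
      using p1[OF that] p2[OF that] pr_nonneg pr_le1 by auto
    moreover have "acc_prob C1 x \<ge> 2/3 \<or> acc_prob C1 x \<le> 1/3" using assms(4) that by (simp add: two_sided_def)
    moreover have "acc_prob C2 x \<ge> 2/3 \<or> acc_prob C2 x \<le> 1/3" using assms(5) that iw2 by (simp add: two_sided_def)
    ultimately show ?thesis unfolding a_def b_def
      using amp[of "acc_prob C1 x"] amp[of "acc_prob C2 x"] by simp
  qed
  have U: "(x \<in> lang C1 \<or> x \<in> lang C2 \<longrightarrow> acc_prob Cu x \<ge> 2/3) \<and>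
      (\<not> (x \<in> lang C1 \<or> x \<in> lang C2) \<longrightarrow> acc_prob Cu x \<le> 1/3)" if "x \<in> input_words C1" for x
  proof (cases "x = []")
    case True then show ?thesis by (simp add: acc_prob_Nil lang_def input_words_def)
  next
    case False
    have l: "x \<in> lang C1 \<longleftrightarrow> acc_prob C1 x \<ge> 2/3" "x \<in> lang C2 \<longleftrightarrow> acc_prob C2 x \<ge> 2/3"
      using that iw2 by (auto simp: lang_def)
    show ?thesis unfolding accU[OF that False] l
      by (rule union_arith) (use ab[OF that] in simp_all)
  qed
  have In: "(x \<in> lang C1 \<and> x \<in> lang C2 \<longrightarrow> acc_prob Ci x \<ge> 2/3) \<and>
      (\<not> (x \<in> lang C1 \<and> x \<in> lang C2) \<longrightarrow> acc_prob Ci x \<le> 1/3)" if "x \<in> input_words C1" for x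
  proof (cases "x = []")
    case True then show ?thesis by (simp add: acc_prob_Nil lang_def input_words_def)
  next
    case False
    have l: "x \<in> lang C1 \<longleftrightarrow> acc_prob C1 x \<ge> 2/3" "x \<in> lang C2 \<longleftrightarrow> acc_prob C2 x \<ge> 2/3"
      using that iw2 by (auto simp: lang_def)
    show ?thesis unfolding accI[OF that False] l
      by (rule inter_arith) (use ab[OF that] in simp_all)
  qed
  have langs: "lang C1 \<subseteq> input_words C1" "lang C2 \<subseteq> input_words C1"
    using iw2 by (auto simp: lang_def)
  have "wf_paca Cu" using sim.wf_Cu[OF simU] by (simp add: Cu_def)
  moreover have "wf_paca Ci" using sim.wf_Cu[OF simI] by (simp add: Ci_def)
  moreover have "inputs Cu = inputs C1" "inputs Ci = inputs C1" by (simp_all add: Cu_def Ci_def mk_def I_def)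
  moreover have "constant_time Cu" using sim.ct_Cu[OF simU] by (simp add: Cu_def)
  moreover have "constant_time Ci" using sim.ct_Cu[OF simI] by (simp add: Ci_def)
  moreover have "two_sided Cu" unfolding two_sided_def iwU
  proof
    fix x assume x: "x \<in> input_words C1"
    show "acc_prob Cu x \<ge> 2/3 \<or> acc_prob Cu x \<le> 1/3"
      using U[OF x] by (cases "x \<in> lang C1 \<or> x \<in> lang C2") simp_all
  qed
  moreover have "two_sided Ci" unfolding two_sided_def iwI
  proof
    fix x assume x: "x \<in> input_words C1"
    show "acc_prob Ci x \<ge> 2/3 \<or> acc_prob Ci x \<le> 1/3"
      using In[OF x] by (cases "x \<in> lang C1 \<and> x \<in> lang C2") simp_all
  qed
  moreover have "lang Cu = lang C1 \<union> lang C2"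
  proof -
    have "lang Cu = {x \<in> input_words C1. acc_prob Cu x \<ge> 2/3}" by (simp add: lang_def iwU)
    also have "\<dots> = lang C1 \<union> lang C2"
    proof (intro equalityI subsetI)
      fix x assume "x \<in> {x \<in> input_words C1. acc_prob Cu x \<ge> 2/3}"
      then have x: "x \<in> input_words C1" and g: "acc_prob Cu x \<ge> 2/3" by auto
      show "x \<in> lang C1 \<union> lang C2"
      proof (rule ccontr)
        assume "x \<notin> lang C1 \<union> lang C2"
        then have "acc_prob Cu x \<le> 1/3" using U[OF x] by simp
        then show False using g by simp
      qed
    next
      fix x assume xl: "x \<in> lang C1 \<union> lang C2"
      then have x: "x \<in> input_words C1" using langs by blast
      then show "x \<in> {x \<in> input_words C1. acc_prob Cu x \<ge> 2/3}" using U[OF x] xl by blast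
    qed
    finally show ?thesis .
  qed
  moreover have "lang Ci = lang C1 \<inter> lang C2"
  proof -
    have "lang Ci = {x \<in> input_words C1. acc_prob Ci x \<ge> 2/3}" by (simp add: lang_def iwI)
    also have "\<dots> = lang C1 \<inter> lang C2"
    proof (intro equalityI subsetI)
      fix x assume "x \<in> {x \<in> input_words C1. acc_prob Ci x \<ge> 2/3}"
      then have x: "x \<in> input_words C1" and g: "acc_prob Ci x \<ge> 2/3" by auto
      show "x \<in> lang C1 \<inter> lang C2"
      proof (rule ccontr)
        assume "x \<notin> lang C1 \<inter> lang C2"
        then have "acc_prob Ci x \<le> 1/3" using In[OF x] by simp
        then show False using g by simp
      qed
    next
      fix x assume xl: "x \<in> lang C1 \<inter> lang C2"
      then have x: "x \<in> input_words C1" using langs by blast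
      then show "x \<in> {x \<in> input_words C1. acc_prob Ci x \<ge> 2/3}" using In[OF x] xl by simp
    qed
    finally show ?thesis .
  qed
  ultimately show ?thesis by blast
qed


end
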